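(* If $(S,K,I)$ is a split graph, then the factor graph $\Phi(S)$ cannot contain an induced path $v_1v_2v_3v_4$ with $\sigma_{23}=1$.
   Context: A split graph $(S,K,I)$ is a graph $S$ together with a fixed partition $V(S)=K\dot\cup I$, where $K$ is a clique and $I$ is an independent set. For a vertex $v_i$ of $S$, $N_i$ denotes its open neighborhood in $S$ and $d_i=|N_i|$; $\eta_{uv}=|N_u\cap N_v|$. The factor graph $\Phi(S)$ is the loopless multigraph with vertex set $I$ in which, for distinct $u,v\in I$, there is one edge joining $u$ and $v$ for each 2-switch of $S$ acting on $u$ and $v$ (a 2-switch replaces edges $ab,cd$ with $ac,bd$ when $ab,cd\in E(S)$ and $ac,bd\notin E(S)$); equivalently, the multiplicity of $uv$ is $\sigma_{uv}=(d_u-\eta_{uv})(d_v-\eta_{uv})$, and $u,v$ are adjacent iff $\sigma_{uv}>0$; $\sigma_{ij}$ denotes $\sigma_{v_iv_j}$. An induced path in $\Phi(S)$ consists of distinct vertices with consecutive ones adjacent and no other pair adjacent (multiplicities ignored). *)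

theory Defs
  imports Main
begin

definition simple_graph :: "'a set \<Rightarrow> ('a \<Rightarrow> 'a \<Rightarrow> bool) \<Rightarrow> bool" where
  "simple_graph V E \<longleftrightarrow> finite V \<and> (\<forall>u v. E u v \<longrightarrow> u \<in> V \<and> v \<in> V)
     \<and> (\<forall>u v. E u v \<longrightarrow> E v u) \<and> (\<forall>v. \<not> E v v)"

definition split_graph :: "'a set \<Rightarrow> ('a \<Rightarrow> 'a \<Rightarrow> bool) \<Rightarrow> 'a set \<Rightarrow> 'a set \<Rightarrow> bool" where
  "split_graph V E K I \<longleftrightarrow> simple_graph V E \<and> K \<union> I = V \<and> K \<inter> I = {}
     \<and> (\<forall>u\<in>K. \<forall>v\<in>K. u \<noteq> v \<longrightarrow> E u v)
     \<and> (\<forall>u\<in>I. \<forall>v\<in>I. \<not> E u v)"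

definition nbhd :: "'a set \<Rightarrow> ('a \<Rightarrow> 'a \<Rightarrow> bool) \<Rightarrow> 'a \<Rightarrow> 'a set" where
  "nbhd V E v = {u \<in> V. E v u}"

definition deg :: "'a set \<Rightarrow> ('a \<Rightarrow> 'a \<Rightarrow> bool) \<Rightarrow> 'a \<Rightarrow> nat" where
  "deg V E v = card (nbhd V E v)"

definition eta :: "'a set \<Rightarrow> ('a \<Rightarrow> 'a \<Rightarrow> bool) \<Rightarrow> 'a \<Rightarrow> 'a \<Rightarrow> nat" where
  "eta V E u v = card (nbhd V E u \<inter> nbhd V E v)"

definition sigma :: "'a set \<Rightarrow> ('a \<Rightarrow> 'a \<Rightarrow> bool) \<Rightarrow> 'a \<Rightarrow> 'a \<Rightarrow> nat" where
  "sigma V E u v = (deg V E u - eta V E u v) * (deg V E v - eta V E u v)"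

text \<open>Adjacency in the factor graph Phi(S) (vertex set I, multiplicities ignored).\<close>
definition factor_adj :: "'a set \<Rightarrow> ('a \<Rightarrow> 'a \<Rightarrow> bool) \<Rightarrow> 'a set \<Rightarrow> 'a \<Rightarrow> 'a \<Rightarrow> bool" where
  "factor_adj V E I u v \<longleftrightarrow> u \<in> I \<and> v \<in> I \<and> u \<noteq> v \<and> sigma V E u v > 0"

definition factor_induced_P4 ::
  "'a set \<Rightarrow> ('a \<Rightarrow> 'a \<Rightarrow> bool) \<Rightarrow> 'a set \<Rightarrow> 'a \<Rightarrow> 'a \<Rightarrow> 'a \<Rightarrow> 'a \<Rightarrow> bool" where
  "factor_induced_P4 V E I v1 v2 v3 v4 \<longleftrightarrow>
     v1 \<in> I \<and> v2 \<in> I \<and> v3 \<in> I \<and> v4 \<in> I \<and> distinct [v1, v2, v3, v4]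
     \<and> factor_adj V E I v1 v2 \<and> factor_adj V E I v2 v3 \<and> factor_adj V E I v3 v4
     \<and> \<not> factor_adj V E I v1 v3 \<and> \<not> factor_adj V E I v1 v4 \<and> \<not> factor_adj V E I v2 v4"

end

theory Submission
  imports Defs
begin

lemma sigma_card:
  assumes "finite V"
  shows "sigma V E u v = card (nbhd V E u - nbhd V E v) * card (nbhd V E v - nbhd V E u)"
proof -
  have f: "finite (nbhd V E x)" for x using assms by (simp add: nbhd_def)
  have "card (nbhd V E u - nbhd V E v) = deg V E u - eta V E u v"
    using card_Diff_subset_Int[of "nbhd V E u" "nbhd V E v"] f
    by (simp add: deg_def eta_def card_Diff_subset_Int Diff_Int2)
  moreover have "card (nbhd V E v - nbhd V E u) = deg V E v - eta V E u v"
    using f by (simp add: deg_def eta_def card_Diff_subset_Int Int_commute)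
  ultimately show ?thesis by (simp add: sigma_def)
qed

lemma sigma_pos:
  assumes "finite V"
  shows "sigma V E u v > 0 \<longleftrightarrow> \<not> nbhd V E u \<subseteq> nbhd V E v \<and> \<not> nbhd V E v \<subseteq> nbhd V E u"
proof -
  have f: "finite (nbhd V E x)" for x using assms by (simp add: nbhd_def)
  have "0 < card (A - B) \<longleftrightarrow> \<not> A \<subseteq> B" if "finite A" for A B :: "'a set"
    using that by (simp add: card_gt_0_iff)
  then show ?thesis using f by (simp add: sigma_card[OF assms])
qed

lemma sigma_one:
  assumes "finite V" "sigma V E u v = 1"
  shows "\<exists>a b. nbhd V E u - nbhd V E v = {a} \<and> nbhd V E v - nbhd V E u = {b}"
  using assms(2) by (simp add: sigma_card[OF assms(1)] card_1_singleton_iff)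

lemma sets_lemma:
  fixes N1 N2 N3 N4 :: "'a set"
  assumes "N2 - N3 = {a}" "N3 - N2 = {b}"
    and "\<not> N1 \<subseteq> N2" "\<not> N2 \<subseteq> N1"
    and "\<not> N3 \<subseteq> N4" "\<not> N4 \<subseteq> N3"
    and "N1 \<subseteq> N3 \<or> N3 \<subseteq> N1" "N1 \<subseteq> N4 \<or> N4 \<subseteq> N1" "N2 \<subseteq> N4 \<or> N4 \<subseteq> N2"
  shows False
proof -
  have a2: "a \<in> N2" "a \<notin> N3" and b3: "b \<in> N3" "b \<notin> N2" using assms(1,2) by blast+
  have c: "N2 \<subseteq> N3 \<union> {a}" "N3 \<subseteq> N2 \<union> {b}" using assms(1,2) by blast+
  show False
  proof (cases "N1 \<subseteq> N3")
    case True
    then have "b \<in> N1" using assms(3) c by blast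
    show False
    proof (cases "N4 \<subseteq> N2")
      case True
      then have "a \<in> N4" using assms(6) c by blast
      then show ?thesis using \<open>b \<in> N1\<close> \<open>N1 \<subseteq> N3\<close> True a2 b3 assms(8) by blast
    next
      case False
      then have "N2 \<subseteq> N4" using assms(9) by blast
      then have "b \<notin> N4" using assms(5) c by blast
      then show ?thesis using \<open>b \<in> N1\<close> \<open>N1 \<subseteq> N3\<close> assms(6,8) by blast
    qed
  next
    case False
    then have "N3 \<subseteq> N1" using assms(7) by blast
    then have "a \<notin> N1" using assms(4) c by blast
    show False
    proof (cases "N4 \<subseteq> N2")
      case True
      then have "a \<in> N4" using assms(6) c by blast
      then show ?thesis using \<open>a \<notin> N1\<close> True assms(3,8) by blast
    next
      case False
      then have "N2 \<subseteq> N4" using assms(9) by blast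
      then have "b \<notin> N4" using assms(5) c by blast
      then show ?thesis using \<open>N3 \<subseteq> N1\<close> \<open>N2 \<subseteq> N4\<close> b3 assms(4,8) by blast
    qed
  qed
qed

theorem theorem4p1:
  fixes V K I :: "'a set" and E :: "'a \<Rightarrow> 'a \<Rightarrow> bool"
  assumes "split_graph V E K I"
  shows "\<not> (\<exists>v1 v2 v3 v4. factor_induced_P4 V E I v1 v2 v3 v4 \<and> sigma V E v2 v3 = 1)"
proof
  assume "\<exists>v1 v2 v3 v4. factor_induced_P4 V E I v1 v2 v3 v4 \<and> sigma V E v2 v3 = 1"
  then obtain v1 v2 v3 v4 where P: "factor_induced_P4 V E I v1 v2 v3 v4" and s: "sigma V E v2 v3 = 1"
    by blast
  have fin: "finite V" using assms by (simp add: split_graph_def simple_graph_def)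
  obtain a b where ab: "nbhd V E v2 - nbhd V E v3 = {a}" "nbhd V E v3 - nbhd V E v2 = {b}"
    using sigma_one[OF fin s] by blast
  show False
    apply (rule sets_lemma[OF ab, of "nbhd V E v1" "nbhd V E v4"])
    using P by (auto simp: factor_induced_P4_def factor_adj_def sigma_pos[OF fin])
qed

end
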